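(* Work in the projective model of $\mathbf{Sol}$ geometry described in the context. Let $P_1=(1,0,0,0)$, $P_2=(1,a,b,c)$ and $P_3=(1,d,e,f)$. For a point $P=(1,x,y,z)$ let $P^i=\mathbf{T}_P^{-1}(P_i)$, i.e. $P^1=(1,-xe^{z},-ye^{-z},-z)$, $P^2=(1,(a-x)e^{z},(b-y)e^{-z},c-z)$, $P^3=(1,(d-x)e^{z},(e-y)e^{-z},f-z)$. Then the translation-like triangular surface $S^{\mathbf{Sol},t}_{P_1,P_2,P_3}$ has the equation \[ 0=\mathbf{t}(P^1)\cdot\mathbf{t}(P^2)\cdot\mathbf{t}(P^3)=\frac{z(z-c)(z-f)}{(1-e^{-z})(e^z-e^c)(e^z-e^f)}\Big((e^z-1)(bde^f-aee^c)+(e^f-1)(aye^c-bxe^z)+(e^c-1)(exe^z-dye^f)\Big), \] where $\mathbf{t}(P^1)\cdot\mathbf{t}(P^2)\cdot\mathbf{t}(P^3)$ denotes the Euclidean triple product (determinant) of the three vectors.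
   Context: $\mathbf{Sol}$ is modelled on $\mathbb{R}^3$ with points in homogeneous coordinates $(1,x,y,z)$. For $Q=(1,q_1,q_2,q_3)$ the translation $\mathbf{T}_Q$ acts on row vectors from the right by the matrix $\begin{pmatrix}1&q_1&q_2&q_3\\0&e^{-q_3}&0&0\\0&0&e^{q_3}&0\\0&0&0&1\end{pmatrix}$, mapping $E_0=(1,0,0,0)$ to $Q$. A translation curve from $E_0$ with unit initial tangent $(u,v,w)$ is $x(t)=-\frac uw(e^{-wt}-1)$, $y(t)=\frac vw(e^{wt}-1)$, $z(t)=wt$ (for $w\ne0$; $x=ut,y=vt,z=0$ if $w=0$); translation curves from $Q$ are their $\mathbf{T}_Q$-images, and the translation distance $d^t(Q,P)$ is the length of the translation curve segment from $Q$ to $P$. For a point $(1,x,y,z)$ with $z\ne0$, $\mathbf{t}(x,y,z):=\big(\frac{xz}{1-e^{-z}},\frac{yz}{e^z-1},z\big)$; this equals $d^t(E_0,(1,x,y,z))$ times the unit initial tangent vector at $E_0$ of the translation curve from $E_0$ to $(1,x,y,z)$. The translation-like triangular surface $S^{\mathbf{Sol},t}_{P_1,P_2,P_3}$ is the set of points $P$ such that the tangent vectors at $P$ of the translation curves from $P$ to $P_1,P_2,P_3$ are coplanar; equivalently (pulling back by $\mathbf{T}_P^{-1}$) such that the vectors $\mathbf{t}(P^1),\mathbf{t}(P^2),\mathbf{t}(P^3)$ are linearly dependent. *)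

theory Defs
  imports "HOL-Analysis.Analysis"
begin

text \<open>Points of Sol in homogeneous coordinates (1,x,y,z) are represented by their
affine coordinate triples (x,y,z).  The translation T_Q for Q = (1,q1,q2,q3) acts on
row vectors from the right by the matrix given in the paper, i.e.
(1,x,y,z) maps to (1, q1 + x e^(-q3), q2 + y e^(q3), q3 + z).\<close>

definition sol_trans :: "real \<times> real \<times> real \<Rightarrow> real \<times> real \<times> real \<Rightarrow> real \<times> real \<times> real" where
  "sol_trans Q p = (case Q of (q1, q2, q3) \<Rightarrow> case p of (x, y, z) \<Rightarrow>
      (q1 + x * exp (- q3), q2 + y * exp q3, q3 + z))"

text \<open>The vector t(x,y,z) (defined in the paper for z \<noteq> 0; for z = 0 we use the
value (x,y,0) given by the straight translation curve).\<close>

definition sol_t :: "real \<times> real \<times> real \<Rightarrow> real^3" where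
  "sol_t p = (case p of (x, y, z) \<Rightarrow>
      if z = 0 then vector [x, y, 0]
      else vector [x * z / (1 - exp (- z)), y * z / (exp z - 1), z])"

definition triple_prod :: "real^3 \<Rightarrow> real^3 \<Rightarrow> real^3 \<Rightarrow> real" where
  "triple_prod u v w = det (vector [u, v, w] :: real^3^3)"

text \<open>Translation-like triangular surface, via the pulled-back characterisation:
P lies on it iff t(T_P^-1 P1), t(T_P^-1 P2), t(T_P^-1 P3) are linearly dependent.\<close>

definition lin_dep3 :: "real^3 \<Rightarrow> real^3 \<Rightarrow> real^3 \<Rightarrow> bool" where
  "lin_dep3 u v w = (\<exists>l1 l2 l3. (l1, l2, l3) \<noteq> (0, 0, 0) \<and> l1 *\<^sub>R u + l2 *\<^sub>R v + l3 *\<^sub>R w = 0)"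

definition sol_tri_surface ::
  "real \<times> real \<times> real \<Rightarrow> real \<times> real \<times> real \<Rightarrow> real \<times> real \<times> real \<Rightarrow> (real \<times> real \<times> real) set" where
  "sol_tri_surface P1 P2 P3 = {P. lin_dep3 (sol_t (inv (sol_trans P) P1))
       (sol_t (inv (sol_trans P) P2)) (sol_t (inv (sol_trans P) P3))}"

end

theory Submission
  imports Defs
begin

lemma tr_mv: "transpose (vector [u, v, w] :: real^3^3) *v l = (l$1) *\<^sub>R u + (l$2) *\<^sub>R v + (l$3) *\<^sub>R w"
  by (simp add: vec_eq_iff matrix_vector_mult_def transpose_def sum_3 mult.commute)

lemma lin_dep3_iff: "lin_dep3 u v w \<longleftrightarrow> triple_prod u v w = 0"
proof -
  let ?M = "vector [u, v, w] :: real^3^3"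
  have "triple_prod u v w = 0 \<longleftrightarrow> \<not> invertible (transpose ?M)"
    unfolding triple_prod_def by (simp add: invertible_det_nz)
  also have "\<dots> \<longleftrightarrow> (\<exists>l. transpose ?M *v l = 0 \<and> l \<noteq> 0)"
    unfolding invertible_left_inverse matrix_left_invertible_ker by blast
  also have "\<dots> \<longleftrightarrow> lin_dep3 u v w"
    unfolding tr_mv lin_dep3_def
  proof
    assume "\<exists>l::real^3. l$1 *\<^sub>R u + l$2 *\<^sub>R v + l$3 *\<^sub>R w = 0 \<and> l \<noteq> 0"
    then obtain l :: "real^3" where "l$1 *\<^sub>R u + l$2 *\<^sub>R v + l$3 *\<^sub>R w = 0" "l \<noteq> 0" by blast
    then show "\<exists>l1 l2 l3. (l1, l2, l3) \<noteq> (0, 0, 0) \<and> l1 *\<^sub>R u + l2 *\<^sub>R v + l3 *\<^sub>R w = 0"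
      by (intro exI[of _ "l$1"] exI[of _ "l$2"] exI[of _ "l$3"]) (auto simp: vec_eq_iff forall_3)
  next
    assume "\<exists>l1 l2 l3. (l1, l2, l3) \<noteq> (0, 0, 0) \<and> l1 *\<^sub>R u + l2 *\<^sub>R v + l3 *\<^sub>R w = 0"
    then obtain l1 l2 l3 :: real where "(l1, l2, l3) \<noteq> (0, 0, 0)" "l1 *\<^sub>R u + l2 *\<^sub>R v + l3 *\<^sub>R w = 0" by blast
    then show "\<exists>l::real^3. (l$1) *\<^sub>R u + (l$2) *\<^sub>R v + (l$3) *\<^sub>R w = 0 \<and> l \<noteq> 0"
      by (intro exI[of _ "vector [l1, l2, l3] :: real^3"]) (auto simp: vec_eq_iff forall_3)
  qed
  finally show ?thesis by simp
qed

lemma inv_trans: "inv (sol_trans (x, y, z)) (q1, q2, q3) = ((q1 - x) * exp z, (q2 - y) * exp (- z), q3 - z)"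
proof -
  have inj: "inj (sol_trans (x, y, z))"
    by (auto simp: inj_def sol_trans_def)
  have "sol_trans (x, y, z) ((q1 - x) * exp z, (q2 - y) * exp (- z), q3 - z) = (q1, q2, q3)"
    by (simp add: sol_trans_def mult.assoc flip: exp_add)
  then show ?thesis by (metis inj inv_f_f)
qed

lemma sol_t_nz: "w \<noteq> 0 \<Longrightarrow> sol_t (A, B, w) = vector [A * w / (1 - exp (- w)), B * w / (exp w - 1), w]"
  unfolding sol_t_def by simp

lemma alg_poly:
  fixes a b c d e f x y z E C F u p q :: real
  shows "det (vector [vector [u * (x * E * z), u * (y * z), u * (- z * (1 - E))],
     vector [p * ((a - x) * E * C * (c - z)), p * ((b - y) * (c - z)), p * ((c - z) * (C - E))],
     vector [q * ((d - x) * E * F * (f - z)), q * ((e - y) * (f - z)), q * ((f - z) * (F - E))]] :: real^3^3)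
   = - E * u * p * q * (z * (z - c) * (z - f)) *
      ((E - 1) * (b * d * F - a * e * C) + (F - 1) * (a * y * C - b * x * E)
       + (C - 1) * (e * x * E - d * y * F))"
  unfolding det_3 by simp algebra

theorem lemma4p2:
  fixes a b c d e f x y z :: real
  assumes "z \<noteq> 0" and "z \<noteq> c" and "z \<noteq> f"
  defines "P \<equiv> (x, y, z)"
  defines "RHS \<equiv> z * (z - c) * (z - f) / ((1 - exp (- z)) * (exp z - exp c) * (exp z - exp f)) *
      ((exp z - 1) * (b * d * exp f - a * e * exp c) + (exp f - 1) * (a * y * exp c - b * x * exp z)
       + (exp c - 1) * (e * x * exp z - d * y * exp f))"
  shows "inv (sol_trans P) (0, 0, 0) = (- x * exp z, - y * exp (- z), - z)
    \<and> inv (sol_trans P) (a, b, c) = ((a - x) * exp z, (b - y) * exp (- z), c - z)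
    \<and> inv (sol_trans P) (d, e, f) = ((d - x) * exp z, (e - y) * exp (- z), f - z)
    \<and> triple_prod (sol_t (inv (sol_trans P) (0, 0, 0))) (sol_t (inv (sol_trans P) (a, b, c)))
        (sol_t (inv (sol_trans P) (d, e, f))) = RHS
    \<and> (P \<in> sol_tri_surface (0, 0, 0) (a, b, c) (d, e, f) \<longleftrightarrow> RHS = 0)"
proof -
  define E where "E = exp z"
  define C where "C = exp c"
  define F where "F = exp f"
  have Ep: "E > 0" "C > 0" "F > 0" by (auto simp: E_def C_def F_def)
  have E1: "1 - E \<noteq> 0" using assms(1) by (simp add: E_def)
  have EC: "C - E \<noteq> 0" using assms(2) by (simp add: E_def C_def)
  have EF: "F - E \<noteq> 0" using assms(3) by (simp add: E_def F_def)
  define u where "u = 1 / (1 - E)"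
  define p where "p = 1 / (C - E)"
  define q where "q = 1 / (F - E)"
  have i1: "inv (sol_trans P) (0, 0, 0) = (- x * exp z, - y * exp (- z), - z)"
    unfolding P_def inv_trans by simp
  have i2: "inv (sol_trans P) (a, b, c) = ((a - x) * exp z, (b - y) * exp (- z), c - z)"
    unfolding P_def inv_trans by simp
  have i3: "inv (sol_trans P) (d, e, f) = ((d - x) * exp z, (e - y) * exp (- z), f - z)"
    unfolding P_def inv_trans by simp
  have emz: "exp (- z) = 1 / E" by (simp add: E_def exp_minus field_simps)
  have ecz: "exp (c - z) = C / E" "exp (- (c - z)) = E / C" by (simp_all add: E_def C_def exp_diff exp_minus field_simps)
  have efz: "exp (f - z) = F / E" "exp (- (f - z)) = E / F" by (simp_all add: E_def F_def exp_diff exp_minus field_simps)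
  have aux: "E * (y * z) / (E - E * E) = y * z / (1 - E)"
    using Ep E1 by (simp add: frac_eq_eq) (simp add: algebra_simps)
  have e11: "- x * exp z * - z / (1 - exp (- (- z))) = u * (x * E * z)"
    unfolding u_def E_def by simp
  have e12: "- y * exp (- z) * - z / (exp (- z) - 1) = u * (y * z)"
    unfolding u_def emz using aux Ep by (simp add: field_simps)
  have e13: "- z = u * (- z * (1 - E))" unfolding u_def using E1 by simp
  have e21: "(a - x) * exp z * (c - z) / (1 - exp (- (c - z))) = p * ((a - x) * E * C * (c - z))"
    unfolding p_def ecz E_def[symmetric] using Ep EC by (simp add: field_simps)
  have e22: "(b - y) * exp (- z) * (c - z) / (exp (c - z) - 1) = p * ((b - y) * (c - z))"
    unfolding p_def ecz emz using Ep EC by (simp add: field_simps)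
  have e23: "c - z = p * ((c - z) * (C - E))" unfolding p_def using EC by simp
  have e31: "(d - x) * exp z * (f - z) / (1 - exp (- (f - z))) = q * ((d - x) * E * F * (f - z))"
    unfolding q_def efz E_def[symmetric] using Ep EF by (simp add: field_simps)
  have e32: "(e - y) * exp (- z) * (f - z) / (exp (f - z) - 1) = q * ((e - y) * (f - z))"
    unfolding q_def efz emz using Ep EF by (simp add: field_simps)
  have e33: "f - z = q * ((f - z) * (F - E))" unfolding q_def using EF by simp
  have t1: "sol_t (- x * exp z, - y * exp (- z), - z) = vector [u * (x * E * z), u * (y * z), u * (- z * (1 - E))]"
  proof -
    have nz: "- z \<noteq> 0" using assms(1) by simp
    show ?thesis unfolding sol_t_nz[OF nz] e11 e12 e13[symmetric] ..
  qed
  have t2: "sol_t ((a - x) * exp z, (b - y) * exp (- z), c - z) = vector [p * ((a - x) * E * C * (c - z)), p * ((b - y) * (c - z)), p * ((c - z) * (C - E))]"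
  proof -
    have nz: "c - z \<noteq> 0" using assms(2) by simp
    show ?thesis unfolding sol_t_nz[OF nz] e21 e22 e23[symmetric] ..
  qed
  have t3: "sol_t ((d - x) * exp z, (e - y) * exp (- z), f - z) = vector [q * ((d - x) * E * F * (f - z)), q * ((e - y) * (f - z)), q * ((f - z) * (F - E))]"
  proof -
    have nz: "f - z \<noteq> 0" using assms(3) by simp
    show ?thesis unfolding sol_t_nz[OF nz] e31 e32 e33[symmetric] ..
  qed
  define K where "K = (E - 1) * (b * d * F - a * e * C) + (F - 1) * (a * y * C - b * x * E)
       + (C - 1) * (e * x * E - d * y * F)"
  have fac: "1 / ((1 - 1 / E) * (E - C) * (E - F)) = - E * u * p * q"
  proof -
    have "(1 - 1 / E) * (E - C) * (E - F) = - ((1 - E) * (C - E) * (F - E)) / E"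
      using Ep by (simp add: field_simps)
    then show ?thesis unfolding u_def p_def q_def using E1 EC EF Ep by simp
  qed
  have RK: "RHS = z * (z - c) * (z - f) * (1 / ((1 - 1 / E) * (E - C) * (E - F))) * K"
    unfolding RHS_def K_def emz[symmetric] by (simp add: E_def C_def F_def)
  have R: "RHS = - E * u * p * q * (z * (z - c) * (z - f)) * K"
    unfolding RK fac by simp
  have T: "triple_prod (sol_t (inv (sol_trans P) (0, 0, 0))) (sol_t (inv (sol_trans P) (a, b, c)))
        (sol_t (inv (sol_trans P) (d, e, f))) = RHS"
    unfolding i1 i2 i3 t1 t2 t3 triple_prod_def alg_poly R K_def ..
  have S: "P \<in> sol_tri_surface (0, 0, 0) (a, b, c) (d, e, f) \<longleftrightarrow> RHS = 0"
    unfolding sol_tri_surface_def mem_Collect_eq lin_dep3_iff T ..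
  show ?thesis using i1 i2 i3 T S by blast
qed

end
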